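(* Assume $\sup_{x\in[-1,1]}|F_{uv}(x)|<\frac12$ for every edge $uv\in E$. Then the Jacobian matrix $J(\mathbf{x})$ of $g$, with entries $J_{u,u}=1+\sum_{v\in N_u}\mathbf{x}_v[F_{uv}(\mathbf{x}_u-\mathbf{x}_v)+\mathbf{x}_uF'_{uv}(\mathbf{x}_u-\mathbf{x}_v)]$, $J_{u,v}=\mathbf{x}_u[F_{uv}(\mathbf{x}_u-\mathbf{x}_v)-\mathbf{x}_vF'_{uv}(\mathbf{x}_u-\mathbf{x}_v)]$ if $uv\in E$ and $J_{u,v}=0$ otherwise ($u\neq v$), is invertible at every $\mathbf{x}\in\Delta_n$. Moreover, $g$ is a local diffeomorphism in a neighborhood of $\Delta_n$.
   Context: $G=(V,E)$ is a finite undirected graph with $n$ vertices, $N_u$ the neighbourhood of $u$, $\Delta_n=\{\mathbf{x}\in\mathbb{R}^n_{\ge 0}:\sum_v\mathbf{x}_v=1\}$. For every edge $uv\in E$, $F_{uv}=F_{vu}:[-1,1]\to[-1,1]$ is continuously differentiable, $F_{uv}(0)=0$, increasing and odd. The map $g$ is given by the formula $g(\mathbf{x})_u=\mathbf{x}_u+\sum_{v\in N_u}\mathbf{x}_u\mathbf{x}_vF_{uv}(\mathbf{x}_u-\mathbf{x}_v)$, regarded as a map on a neighbourhood of $\Delta_n$ in $\mathbb{R}^n$. *)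

theory Defs
  imports "HOL-Analysis.Analysis"
begin

text \<open>Vertices are the elements of a finite type 'n; the graph is given by a symmetric,
irreflexive edge relation E. Points of R^n are vectors real^'n.\<close>

definition std_simplex :: "(real^'n::finite) set" where
  "std_simplex = {x. (\<forall>v. x$v \<ge> 0) \<and> (\<Sum>v\<in>UNIV. x$v) = 1}"

definition nbhd :: "('n \<Rightarrow> 'n \<Rightarrow> bool) \<Rightarrow> 'n \<Rightarrow> 'n set" where
  "nbhd E u = {v. E u v}"

definition gmap :: "('n::finite \<Rightarrow> 'n \<Rightarrow> bool) \<Rightarrow> ('n \<Rightarrow> 'n \<Rightarrow> real \<Rightarrow> real)
     \<Rightarrow> real^'n \<Rightarrow> real^'n" where
  "gmap E F x = (\<chi> u. x$u + (\<Sum>v\<in>nbhd E u. x$u * x$v * F u v (x$u - x$v)))"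

definition jac :: "('n::finite \<Rightarrow> 'n \<Rightarrow> bool) \<Rightarrow> ('n \<Rightarrow> 'n \<Rightarrow> real \<Rightarrow> real)
     \<Rightarrow> ('n \<Rightarrow> 'n \<Rightarrow> real \<Rightarrow> real) \<Rightarrow> real^'n \<Rightarrow> real^'n^'n" where
  "jac E F F' x = (\<chi> u w.
     if u = w then 1 + (\<Sum>v\<in>nbhd E u. x$v * (F u v (x$u - x$v) + x$u * F' u v (x$u - x$v)))
     else if E u w then x$u * (F u w (x$u - x$w) - x$w * F' u w (x$u - x$w))
     else 0)"

definition C1_on :: "(real^'n::finite \<Rightarrow> real^'n) \<Rightarrow> (real^'n) set \<Rightarrow> bool" where
  "C1_on f S \<longleftrightarrow> (\<exists>D. (\<forall>y\<in>S. (f has_derivative blinfun_apply (D y)) (at y)) \<and> continuous_on S D)"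

definition local_diffeo_on :: "(real^'n::finite \<Rightarrow> real^'n) \<Rightarrow> (real^'n) set \<Rightarrow> bool" where
  "local_diffeo_on f U \<longleftrightarrow> open U \<and>
     (\<forall>x\<in>U. \<exists>V W h. open V \<and> x \<in> V \<and> V \<subseteq> U \<and> open W \<and> f ` V = W \<and>
        (\<forall>y\<in>V. h (f y) = y) \<and> (\<forall>z\<in>W. f (h z) = z) \<and> C1_on f V \<and> C1_on h W)"

end

theory Submission imports Defs begin

lemma det_cont:
  fixes M :: "'a::topological_space \<Rightarrow> real^'n::finite^'n"
  assumes "\<And>i j. continuous_on S (\<lambda>z. M z $ i $ j)"
  shows "continuous_on S (\<lambda>z. det (M z))"
  unfolding det_def
  by (intro continuous_on_sum continuous_on_mult continuous_on_const continuous_on_prod assms)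

lemma dominance_invertible:
  fixes A :: "real^'n::finite^'n"
  assumes dom: "\<And>w. (\<Sum>u\<in>UNIV-{w}. \<bar>A$u$w\<bar>) < A$w$w"
  shows "invertible A"
proof -
  let ?B = "transpose A"
  have ker: "\<forall>z. ?B *v z = 0 \<longrightarrow> z = 0"
  proof (intro allI impI)
    fix z :: "real^'n" assume Bz: "?B *v z = 0"
    define m where "m = Max (range (\<lambda>j. \<bar>z$j\<bar>))"
    have "m \<in> range (\<lambda>j. \<bar>z$j\<bar>)" unfolding m_def by (intro Max_in) auto
    then obtain k where k: "m = \<bar>z$k\<bar>" by auto
    have le: "\<bar>z$j\<bar> \<le> \<bar>z$k\<bar>" for j using k unfolding m_def by (metis Max_ge finite rangeI finite_imageI)
    have "(?B *v z)$k = 0" using Bz by simp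
    hence "(\<Sum>j\<in>UNIV. A$j$k * z$j) = 0" by (simp add: matrix_vector_mult_def transpose_def)
    also have "(\<Sum>j\<in>UNIV. A$j$k * z$j) = A$k$k * z$k + (\<Sum>j\<in>UNIV-{k}. A$j$k * z$j)"
      by (simp add: sum.remove)
    finally have eq: "A$k$k * z$k = - (\<Sum>j\<in>UNIV-{k}. A$j$k * z$j)" by linarith
    have "\<bar>A$k$k * z$k\<bar> \<le> (\<Sum>j\<in>UNIV-{k}. \<bar>A$j$k\<bar> * \<bar>z$j\<bar>)"
      unfolding eq abs_minus_cancel
      by (rule order_trans[OF sum_abs]) (simp add: abs_mult)
    also have "\<dots> \<le> (\<Sum>j\<in>UNIV-{k}. \<bar>A$j$k\<bar> * \<bar>z$k\<bar>)"
      by (intro sum_mono mult_left_mono le) auto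
    also have "\<dots> = (\<Sum>j\<in>UNIV-{k}. \<bar>A$j$k\<bar>) * \<bar>z$k\<bar>" by (simp add: sum_distrib_right)
    finally have "\<bar>A$k$k\<bar> * \<bar>z$k\<bar> \<le> (\<Sum>j\<in>UNIV-{k}. \<bar>A$j$k\<bar>) * \<bar>z$k\<bar>" by (simp add: abs_mult)
    moreover have "(\<Sum>j\<in>UNIV-{k}. \<bar>A$j$k\<bar>) < \<bar>A$k$k\<bar>" using dom[of k] by linarith
    ultimately have "(\<bar>A$k$k\<bar> - (\<Sum>j\<in>UNIV-{k}. \<bar>A$j$k\<bar>)) * \<bar>z$k\<bar> \<le> 0"
      "\<bar>A$k$k\<bar> - (\<Sum>j\<in>UNIV-{k}. \<bar>A$j$k\<bar>) > 0"
      by (simp_all add: left_diff_distrib)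
    hence "\<bar>z$k\<bar> = 0" by (simp add: mult_le_0_iff)
    hence "\<bar>z$j\<bar> = 0" for j using le[of j] by simp
    thus "z = 0" by (simp add: vec_eq_iff)
  qed
  then obtain C where "C ** ?B = mat 1" using matrix_left_invertible_ker by blast
  hence "invertible ?B" unfolding invertible_def using matrix_left_right_inverse by blast
  hence "invertible (transpose ?B)" by (rule transpose_invertible)
  thus ?thesis by simp
qed
lemma nth_deriv[derivative_intros]: "((\<lambda>x::real^'n::finite. x $ u) has_derivative (\<lambda>h. h $ u)) F"
  by (rule bounded_linear_imp_has_derivative[OF bounded_linear_vec_nth])

lemma F_comp_deriv:
  assumes "\<And>t. (f has_real_derivative f' t) (at t)"
  shows "((\<lambda>x::real^'n::finite. f (x$u - x$v)) has_derivative (\<lambda>h. f' (x$u - x$v) * (h$u - h$v))) (at x)"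
proof -
  have d1: "((\<lambda>x::real^'n. x$u - x$v) has_derivative (\<lambda>h. h$u - h$v)) (at x)"
    by (intro derivative_eq_intros nth_deriv) auto
  have d2: "(f has_derivative (*) (f' (x$u - x$v))) (at (x$u - x$v))"
    using assms[of "x$u - x$v"] by (simp add: has_field_derivative_def)
  from diff_chain_at[OF d1 d2] show ?thesis by (simp add: o_def)
qed

lemma deriv_gmap:
  fixes E :: "'n::finite \<Rightarrow> 'n \<Rightarrow> bool" and x :: "real^'n"
  assumes E_irrefl: "\<And>u. \<not> E u u"
    and F_deriv: "\<And>u v t. E u v \<Longrightarrow> (F u v has_real_derivative F' u v t) (at t)"
  shows "(gmap E F has_derivative (\<lambda>h. jac E F F' x *v h)) (at x)"
proof -
  have comp: "((\<lambda>y. gmap E F y $ u) has_derivative (\<lambda>h. (jac E F F' x *v h) $ u)) (at x)" for u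
  proof -
    let ?d = "\<lambda>v. x$u - x$v"
    have N: "finite (nbhd E u)" by simp
    have "((\<lambda>y. y$u + (\<Sum>v\<in>nbhd E u. y$u * y$v * F u v (y$u - y$v))) has_derivative
       (\<lambda>h. h$u + (\<Sum>v\<in>nbhd E u. (h$u * x$v + x$u * h$v) * F u v (?d v)
            + x$u * x$v * (F' u v (?d v) * (h$u - h$v))))) (at x)"
    proof (intro has_derivative_add has_derivative_sum)
      show "((\<lambda>y. y $ u) has_derivative (\<lambda>h. h $ u)) (at x)"
        by (rule nth_deriv)
      fix v assume "v \<in> nbhd E u"
      hence Euv: "E u v" by (simp add: nbhd_def)
      have a: "((\<lambda>y. y$u * y$v) has_derivative (\<lambda>h. h$u * x$v + x$u * h$v)) (at x)"
        by (intro derivative_eq_intros) (auto simp: algebra_simps)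
      have b: "((\<lambda>y. F u v (y$u - y$v)) has_derivative (\<lambda>h. F' u v (?d v) * (h$u - h$v))) (at x)"
        by (rule F_comp_deriv) (rule F_deriv[OF Euv])
      show "((\<lambda>y. y$u * y$v * F u v (y$u - y$v)) has_derivative
          (\<lambda>h. (h$u * x$v + x$u * h$v) * F u v (?d v) + x$u * x$v * (F' u v (?d v) * (h$u - h$v)))) (at x)"
        using has_derivative_mult[OF a b] by (simp add: algebra_simps)
    qed
    moreover have "(jac E F F' x *v h) $ u = h$u + (\<Sum>v\<in>nbhd E u. (h$u * x$v + x$u * h$v) * F u v (?d v)
            + x$u * x$v * (F' u v (?d v) * (h$u - h$v)))" for h
    proof -
      let ?J = "jac E F F' x"
      have uN: "u \<notin> nbhd E u" using E_irrefl by (simp add: nbhd_def)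
      have "(?J *v h) $ u = (\<Sum>w\<in>UNIV. ?J$u$w * h$w)" by (simp add: matrix_vector_mult_def)
      also have "\<dots> = ?J$u$u * h$u + (\<Sum>w\<in>UNIV-{u}. ?J$u$w * h$w)" by (simp add: sum.remove)
      also have "(\<Sum>w\<in>UNIV-{u}. ?J$u$w * h$w) = (\<Sum>w\<in>nbhd E u. ?J$u$w * h$w)"
        using uN by (intro sum.mono_neutral_right) (auto simp: jac_def nbhd_def)
      also have "(\<Sum>w\<in>nbhd E u. ?J$u$w * h$w) = (\<Sum>w\<in>nbhd E u. x$u * (F u w (?d w) - x$w * F' u w (?d w)) * h$w)"
        using uN by (intro sum.cong) (auto simp: jac_def nbhd_def)
      also have "?J$u$u * h$u = h$u + (\<Sum>v\<in>nbhd E u. x$v * (F u v (?d v) + x$u * F' u v (?d v)) * h$u)"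
        by (simp add: jac_def sum_distrib_right distrib_left distrib_right)
      also have "h$u + (\<Sum>v\<in>nbhd E u. x$v * (F u v (?d v) + x$u * F' u v (?d v)) * h$u) +
          (\<Sum>w\<in>nbhd E u. x$u * (F u w (?d w) - x$w * F' u w (?d w)) * h$w)
        = h$u + (\<Sum>v\<in>nbhd E u. x$v * (F u v (?d v) + x$u * F' u v (?d v)) * h$u +
          x$u * (F u v (?d v) - x$v * F' u v (?d v)) * h$v)"
        by (simp add: sum.distrib)
      also have "\<dots> = h$u + (\<Sum>v\<in>nbhd E u. (h$u * x$v + x$u * h$v) * F u v (?d v)
            + x$u * x$v * (F' u v (?d v) * (h$u - h$v)))"
      proof -
        have pt: "x$v * (F u v (?d v) + x$u * F' u v (?d v)) * h$u +
          x$u * (F u v (?d v) - x$v * F' u v (?d v)) * h$v = (h$u * x$v + x$u * h$v) * F u v (?d v)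
            + x$u * x$v * (F' u v (?d v) * (h$u - h$v))" for v
          by (simp add: algebra_simps)
        show ?thesis by (simp only: pt)
      qed
      finally show ?thesis .
    qed
    ultimately show ?thesis by (simp add: gmap_def)
  qed
  show ?thesis
  proof (rule has_derivative_componentwise_within[THEN iffD2], intro ballI)
    fix i :: "real^'n" assume "i \<in> Basis"
    then obtain u where i: "i = axis u 1" by (auto simp: Basis_vec_def)
    show "((\<lambda>y. gmap E F y \<bullet> i) has_derivative (\<lambda>h. (jac E F F' x *v h) \<bullet> i)) (at x)"
      using comp[of u] by (simp add: i inner_axis)
  qed
qed
lemma jac_cont:
  fixes E :: "'n::finite \<Rightarrow> 'n \<Rightarrow> bool" and S :: "(real^'n) set"
  assumes F_deriv: "\<And>u v t. E u v \<Longrightarrow> (F u v has_real_derivative F' u v t) (at t)"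
    and F'_cont: "\<And>u v. E u v \<Longrightarrow> continuous_on UNIV (F' u v)"
  shows "continuous_on S (\<lambda>x. jac E F F' x $ i $ j)"
proof -
  have Fc: "continuous_on UNIV (F u v)" if "E u v" for u v
    using F_deriv[OF that] by (meson DERIV_isCont continuous_at_imp_continuous_on)
  have Fc2: "continuous_on S (\<lambda>x::real^'n. F u v (x$a - x$b))" if "E u v" for u v a b
    by (rule continuous_on_compose2[OF Fc[OF that]]) (auto intro!: continuous_intros)
  have Fc3: "continuous_on S (\<lambda>x::real^'n. F' u v (x$a - x$b))" if "E u v" for u v a b
    by (rule continuous_on_compose2[OF F'_cont[OF that]]) (auto intro!: continuous_intros)
  show ?thesis
    by (cases "i = j"; cases "E i j")
       (auto simp: jac_def nbhd_def intro!: continuous_intros Fc2 Fc3)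
qed
lemma simplex_bounds:
  assumes "x \<in> std_simplex"
  shows "x$u \<ge> 0" "x$u \<le> 1" "u \<noteq> w \<Longrightarrow> x$u + x$w \<le> 1"
proof -
  have nn: "\<And>v. x$v \<ge> 0" and s1: "(\<Sum>v\<in>UNIV. x$v) = 1" using assms by (auto simp: std_simplex_def)
  show "x$u \<ge> 0" by (rule nn)
  show "x$u \<le> 1" using member_le_sum[of u UNIV "\<lambda>v. x$v"] nn s1 by auto
  assume "u \<noteq> w"
  hence "x$u + x$w = (\<Sum>v\<in>{u,w}. x$v)" by simp
  also have "\<dots> \<le> (\<Sum>v\<in>UNIV. x$v)" by (rule sum_mono2) (auto simp: nn)
  finally show "x$u + x$w \<le> 1" using s1 by simp
qed

lemma deriv_nonneg:
  assumes d: "\<And>t. (f has_real_derivative f' t) (at t)"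
    and m: "mono_on {-1..1} f" and t: "t \<in> {-1<..<1}"
  shows "f' t \<ge> 0"
proof (rule ccontr)
  assume "\<not> f' t \<ge> 0"
  then obtain d where "d > 0" and dd: "\<forall>h>0. h < d \<longrightarrow> f (t + h) < f t"
    using DERIV_neg_dec_right[OF d[of t]] by auto
  define h where "h = min (d/2) ((1 - t)/2)"
  have h: "h > 0" "h < d" "t + h \<le> 1" using t \<open>d>0\<close> unfolding h_def by (auto simp: min_def field_simps)
  have "f t \<le> f (t + h)" using m t h by (intro mono_onD[OF m]) auto
  with dd h show False by force
qed

lemma deriv_odd:
  assumes d1: "(f has_real_derivative a) (at t)" and d2: "(f has_real_derivative b) (at (-t))"
    and odd: "\<And>s. s \<in> {-1..1} \<Longrightarrow> f (-s) = - f s" and t: "t \<in> {-1<..<1}"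
  shows "a = b"
proof -
  have "((\<lambda>s. - f (- s)) has_real_derivative b) (at t)"
  proof -
    have g: "(uminus has_real_derivative -1) (at t)" by (auto intro!: derivative_eq_intros)
    have "((\<lambda>s. f (- s)) has_real_derivative b * -1) (at t)"
      using DERIV_chain2[where f=f and g=uminus and x=t, OF _ g] d2 by simp
    from DERIV_minus[OF this] show ?thesis by simp
  qed
  hence "(f has_real_derivative b) (at t)"
    by (rule has_field_derivative_transform_within_open[where S="{-1<..<1}"]) (use t odd in auto)
  thus ?thesis using d1 DERIV_unique by blast
qed
lemma jac_invertible:
  fixes E :: "'n::finite \<Rightarrow> 'n \<Rightarrow> bool"
    and F F' :: "'n \<Rightarrow> 'n \<Rightarrow> real \<Rightarrow> real"
  assumes E_sym: "\<And>u v. E u v \<Longrightarrow> E v u"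
    and E_irrefl: "\<And>u. \<not> E u u"
    and F_sym: "\<And>u v. E u v \<Longrightarrow> F u v = F v u"
    and F_deriv: "\<And>u v t. E u v \<Longrightarrow> (F u v has_real_derivative F' u v t) (at t)"
    and F_range: "\<And>u v t. E u v \<Longrightarrow> t \<in> {-1..1} \<Longrightarrow> F u v t \<in> {-1..1}"
    and F_incr: "\<And>u v. E u v \<Longrightarrow> mono_on {-1..1} (F u v)"
    and F_odd: "\<And>u v t. E u v \<Longrightarrow> t \<in> {-1..1} \<Longrightarrow> F u v (-t) = - F u v t"
    and F_small: "\<And>u v. E u v \<Longrightarrow> (SUP t\<in>{-1..1}. \<bar>F u v t\<bar>) < 1/2"
    and x: "x \<in> std_simplex"
  shows "invertible (jac E F F' x)"
proof (rule dominance_invertible)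
  fix w
  let ?J = "jac E F F' x"
  let ?N = "nbhd E w"
  have nn: "\<And>v. x$v \<ge> 0" using simplex_bounds[OF x] by auto
  have small: "\<bar>F u v t\<bar> < 1/2" if "E u v" "t \<in> {-1..1}" for u v t
  proof -
    have "bdd_above ((\<lambda>t. \<bar>F u v t\<bar>) ` {-1..1})"
      using F_range[OF that(1)] by (intro bdd_aboveI[of _ 1]) force
    hence "\<bar>F u v t\<bar> \<le> (SUP t\<in>{-1..1}. \<bar>F u v t\<bar>)" using that(2) by (rule cSUP_upper2) auto
    thus ?thesis using F_small[OF that(1)] by linarith
  qed
  have dinr: "x$a - x$b \<in> {-1..1}" for a b
    using simplex_bounds[OF x, of a] simplex_bounds[OF x, of b] by auto
  define a where "a u = x$w * x$u * F' w u (x$w - x$u)" for u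
  have a_props: "a u \<ge> 0 \<and> x$u * x$w * F' u w (x$u - x$w) = a u" if "u \<in> ?N" for u
  proof (cases "x$u = 0 \<or> x$w = 0")
    case True thus ?thesis by (auto simp: a_def)
  next
    case False
    have Ewu: "E w u" using that by (simp add: nbhd_def)
    hence uw: "u \<noteq> w" using E_irrefl by auto
    have pos: "x$u > 0" "x$w > 0" using False nn[of u] nn[of w] by auto
    have t: "x$w - x$u \<in> {-1<..<1}" using simplex_bounds(3)[OF x uw] pos by auto
    have "F' w u (x$w - x$u) \<ge> 0"
      by (rule deriv_nonneg[OF F_deriv[OF Ewu] F_incr[OF Ewu] t])
    moreover have "F' w u (x$w - x$u) = F' u w (-(x$w - x$u))"
    proof (rule deriv_odd[OF F_deriv[OF Ewu] _ F_odd[OF Ewu] t])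
      show "(F w u has_real_derivative F' u w (- (x $ w - x $ u))) (at (- (x $ w - x $ u)))"
        using F_deriv[OF E_sym[OF Ewu]] F_sym[OF Ewu] by simp
    qed
    ultimately show ?thesis using pos by (auto simp: a_def algebra_simps)
  qed
  have wN: "w \<notin> ?N" using E_irrefl by (simp add: nbhd_def)
  have off: "(\<Sum>u\<in>UNIV-{w}. \<bar>?J$u$w\<bar>) = (\<Sum>u\<in>?N. \<bar>?J$u$w\<bar>)"
    using wN by (intro sum.mono_neutral_right) (auto simp: jac_def nbhd_def dest: E_sym)
  also have "\<dots> \<le> (\<Sum>u\<in>?N. x$u * \<bar>F u w (x$u - x$w)\<bar> + a u)"
  proof (intro sum_mono)
    fix u assume uN: "u \<in> ?N"
    hence Euw: "E u w" "u \<noteq> w" using E_sym E_irrefl by (auto simp: nbhd_def)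
    have Juw: "?J$u$w = x$u * F u w (x$u - x$w) - a u"
      using Euw a_props[OF uN] by (simp add: jac_def algebra_simps)
    show "\<bar>?J$u$w\<bar> \<le> x$u * \<bar>F u w (x$u - x$w)\<bar> + a u"
    proof -
      have "\<bar>x$u * F u w (x$u - x$w)\<bar> = x$u * \<bar>F u w (x$u - x$w)\<bar>"
        using nn[of u] by (simp add: abs_mult)
      moreover have "\<bar>x$u * F u w (x$u - x$w) - a u\<bar> \<le> \<bar>x$u * F u w (x$u - x$w)\<bar> + \<bar>a u\<bar>"
        by (rule abs_triangle_ineq4)
      ultimately show ?thesis using a_props[OF uN] Juw by simp
    qed
  qed
  finally have offle: "(\<Sum>u\<in>UNIV-{w}. \<bar>?J$u$w\<bar>) \<le> (\<Sum>u\<in>?N. x$u * \<bar>F u w (x$u - x$w)\<bar> + a u)" .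
  have diag: "?J$w$w = 1 + (\<Sum>u\<in>?N. x$u * F w u (x$w - x$u) + a u)"
    by (simp add: jac_def a_def algebra_simps)
  define c where "c u = \<bar>F w u (x$w - x$u)\<bar> + \<bar>F u w (x$u - x$w)\<bar>" for u
  have c1: "c u < 1" if "u \<in> ?N" for u
  proof -
    have "E w u" "E u w" using that E_sym by (auto simp: nbhd_def)
    thus ?thesis using small[of w u "x$w - x$u"] small[of u w "x$u - x$w"] dinr by (auto simp: c_def)
  qed
  have sumN: "(\<Sum>u\<in>?N. x$u) \<le> 1"
  proof -
    have "(\<Sum>u\<in>?N. x$u) \<le> (\<Sum>u\<in>UNIV. x$u)" by (rule sum_mono2) (auto simp: nn)
    thus ?thesis using x by (simp add: std_simplex_def)
  qed
  have csum: "(\<Sum>u\<in>?N. x$u * c u) < 1"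
  proof (cases "\<exists>u\<in>?N. x$u > 0")
    case True
    have "(\<Sum>u\<in>?N. x$u * c u) < (\<Sum>u\<in>?N. x$u)"
    proof (rule sum_strict_mono_ex1)
      show "\<forall>u\<in>?N. x$u * c u \<le> x$u" using c1 nn by (metis less_eq_real_def mult.right_neutral mult_left_mono)
      show "\<exists>u\<in>?N. x$u * c u < x$u"
      proof -
        from True obtain u where "u \<in> ?N" "x$u > 0" by auto
        with c1[of u] have "x$u * c u < x$u * 1" by (intro mult_strict_left_mono) auto
        thus ?thesis using \<open>u \<in> ?N\<close> by auto
      qed
    qed simp
    thus ?thesis using sumN by linarith
  next
    case False
    hence "\<forall>u\<in>?N. x$u = 0" using nn by (meson not_le order_antisym)
    thus ?thesis by simp
  qed
  have "(\<Sum>u\<in>?N. x$u * \<bar>F u w (x$u - x$w)\<bar> + a u) - (\<Sum>u\<in>?N. x$u * F w u (x$w - x$u) + a u)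
        \<le> (\<Sum>u\<in>?N. x$u * c u)"
    unfolding sum_subtractf[symmetric]
  proof (intro sum_mono)
    fix u
    have "x$u * (- F w u (x$w - x$u)) \<le> x$u * \<bar>F w u (x$w - x$u)\<bar>"
      by (intro mult_left_mono nn) auto
    thus "x$u * \<bar>F u w (x$u - x$w)\<bar> + a u - (x$u * F w u (x$w - x$u) + a u) \<le> x$u * c u"
      by (simp add: c_def algebra_simps)
  qed
  with offle diag csum show "(\<Sum>u\<in>UNIV-{w}. \<bar>?J$u$w\<bar>) < ?J$w$w" by linarith
qed
definition cinv :: "real^'n::finite^'n \<Rightarrow> real^'n^'n" where
  "cinv A = (\<chi> k j. det (\<chi> a b. if b = k then axis j 1 $ a else A$a$b) / det A)"

lemma cinv_right:
  fixes A :: "real^'n::finite^'n"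
  assumes d: "det A \<noteq> 0"
  shows "A ** cinv A = mat 1" "cinv A ** A = mat 1"
proof -
  have col: "A *v (\<chi> k. cinv A $ k $ j) = axis j 1" for j
    using cramer[OF d, of "\<chi> k. cinv A $ k $ j" "axis j 1"] by (simp add: cinv_def)
  show 1: "A ** cinv A = mat 1"
  proof (subst vec_eq_iff, intro allI, subst vec_eq_iff, intro allI)
    fix i j
    have "(A *v (\<chi> k. cinv A $ k $ j)) $ i = axis j 1 $ i" using col by simp
    thus "(A ** cinv A) $ i $ j = mat 1 $ i $ j"
      by (simp add: matrix_matrix_mult_def matrix_vector_mult_def mat_def axis_def)
  qed
  thus "cinv A ** A = mat 1" using matrix_left_right_inverse by blast
qed

lemma blin_mv: "blinfun_apply (Blinfun (\<lambda>h. (A::real^'n::finite^'n) *v h)) = (\<lambda>h. A *v h)"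
  using bounded_linear_Blinfun_apply[OF matrix_vector_mul_bounded_linear[of A]] by simp

lemma cont_blin:
  fixes M :: "'a::t2_space \<Rightarrow> real^'n::finite^'n"
  assumes "\<And>i j. continuous_on S (\<lambda>x. M x $ i $ j)"
  shows "continuous_on S (\<lambda>x. Blinfun (\<lambda>h. M x *v h))"
proof (rule continuous_on_blinfun_componentwise)
  fix i :: "real^'n"
  show "continuous_on S (\<lambda>x. blinfun_apply (Blinfun (\<lambda>h. M x *v h)) i)"
    unfolding blin_mv unfolding matrix_vector_mult_def
    by (intro continuous_on_vec_lambda continuous_on_sum continuous_on_mult continuous_on_const assms)
qed

lemma inv_mv:
  fixes A :: "real^'n::finite^'n"
  assumes "det A \<noteq> 0"
  shows "inv (\<lambda>h. A *v h) = (\<lambda>h. cinv A *v h)"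
  by (rule inv_unique_comp) (auto simp: o_def matrix_vector_mul_assoc cinv_right[OF assms])

theorem mainTheorem6:
  fixes E :: "'n::finite \<Rightarrow> 'n \<Rightarrow> bool"
    and F F' :: "'n \<Rightarrow> 'n \<Rightarrow> real \<Rightarrow> real"
  assumes E_sym: "\<And>u v. E u v \<Longrightarrow> E v u"
    and E_irrefl: "\<And>u. \<not> E u u"
    and F_sym: "\<And>u v. E u v \<Longrightarrow> F u v = F v u"
    and F_deriv: "\<And>u v t. E u v \<Longrightarrow> (F u v has_real_derivative F' u v t) (at t)"
    and F'_cont: "\<And>u v. E u v \<Longrightarrow> continuous_on UNIV (F' u v)"
    and F_range: "\<And>u v t. E u v \<Longrightarrow> t \<in> {-1..1} \<Longrightarrow> F u v t \<in> {-1..1}"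
    and F_zero: "\<And>u v. E u v \<Longrightarrow> F u v 0 = 0"
    and F_incr: "\<And>u v. E u v \<Longrightarrow> mono_on {-1..1} (F u v)"
    and F_odd: "\<And>u v t. E u v \<Longrightarrow> t \<in> {-1..1} \<Longrightarrow> F u v (-t) = - F u v t"
    and F_small: "\<And>u v. E u v \<Longrightarrow> (SUP t\<in>{-1..1}. \<bar>F u v t\<bar>) < 1/2"
  shows "(\<forall>x\<in>std_simplex. invertible (jac E F F' x)) \<and>
         (\<exists>U. open U \<and> std_simplex \<subseteq> U \<and> local_diffeo_on (gmap E F) U)"
proof
  show inv: "\<forall>x\<in>std_simplex. invertible (jac E F F' x)"
    using jac_invertible[of E F F', OF E_sym E_irrefl F_sym F_deriv F_range F_incr F_odd F_small] by blast
  let ?J = "jac E F F'"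
  let ?g = "gmap E F"
  define D where "D x = Blinfun (\<lambda>h. ?J x *v h)" for x
  define U where "U = {x. det (?J x) \<noteq> 0}"
  have Jc: "\<And>i j S. continuous_on S (\<lambda>x. ?J x $ i $ j)"
    by (rule jac_cont[OF F_deriv F'_cont])
  have detc: "continuous_on UNIV (\<lambda>x. det (?J x))" by (rule det_cont[OF Jc])
  have oU: "open U" unfolding U_def by (rule open_Collect_neq[OF detc continuous_on_const])
  have Dc: "continuous_on S D" for S unfolding D_def by (rule cont_blin[OF Jc])
  have Dd: "(?g has_derivative blinfun_apply (D x)) (at x)" for x
    unfolding D_def blin_mv by (rule deriv_gmap[OF E_irrefl F_deriv])
  have "local_diffeo_on ?g U"
    unfolding local_diffeo_on_def
  proof (intro conjI oU ballI)
    fix x0 assume x0: "x0 \<in> U"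
    hence d0: "det (?J x0) \<noteq> 0" by (simp add: U_def)
    have invf: "Blinfun (\<lambda>h. cinv (?J x0) *v h) o\<^sub>L D x0 = id_blinfun"
      by (rule blinfun_eqI) (simp add: D_def blin_mv matrix_vector_mul_assoc cinv_right[OF d0])
    obtain U' V h g' where U': "open U'" "U' \<subseteq> U" "x0 \<in> U'" and V: "open V" "?g x0 \<in> V"
      and hom: "homeomorphism U' V ?g h"
      and hd: "\<And>y. y \<in> V \<Longrightarrow> (h has_derivative (g' y)) (at y)"
      and g': "\<And>y. y \<in> V \<Longrightarrow> g' y = inv (blinfun_apply (D (h y)))"
      and "\<And>y. y \<in> V \<Longrightarrow> bij (blinfun_apply (D (h y)))"
      by (rule inverse_function_theorem[OF oU Dd Dc x0 invf]) (rule that)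
    have hU: "h z \<in> U" if "z \<in> V" for z using hom U'(2) that unfolding homeomorphism_def by blast
    have hc: "continuous_on V h" using hom unfolding homeomorphism_def by blast
    show "\<exists>V W h. open V \<and> x0 \<in> V \<and> V \<subseteq> U \<and> open W \<and> ?g ` V = W \<and>
        (\<forall>y\<in>V. h (?g y) = y) \<and> (\<forall>z\<in>W. ?g (h z) = z) \<and> C1_on ?g V \<and> C1_on h W"
    proof (intro exI conjI)
      show "open U'" "x0 \<in> U'" "U' \<subseteq> U" "open V" by fact+
      show "?g ` U' = V" "\<forall>y\<in>U'. h (?g y) = y" "\<forall>z\<in>V. ?g (h z) = z"
        using hom unfolding homeomorphism_def by auto
      show "C1_on ?g U'" unfolding C1_on_def using Dd Dc by blast
      show "C1_on h V" unfolding C1_on_def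
      proof (intro exI conjI ballI)
        fix z assume z: "z \<in> V"
        have "g' z = (\<lambda>v. cinv (?J (h z)) *v v)"
          using g'[OF z] hU[OF z] by (simp add: D_def blin_mv inv_mv U_def)
        thus "(h has_derivative blinfun_apply (Blinfun (\<lambda>v. cinv (?J (h z)) *v v))) (at z)"
          using hd[OF z] by (simp add: blin_mv)
      next
        show "continuous_on V (\<lambda>z. Blinfun (\<lambda>v. cinv (?J (h z)) *v v))"
        proof (rule cont_blin)
          fix k j
          have Jhc: "continuous_on V (\<lambda>z. ?J (h z) $ a $ b)" for a b
            by (rule continuous_on_compose2[OF Jc hc]) auto
          have "continuous_on V (\<lambda>z. det (\<chi> a b. if b = k then axis j 1 $ a else ?J (h z) $ a $ b))"
          proof (rule det_cont)
            fix a b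
            show "continuous_on V (\<lambda>z. (\<chi> a b. if b = k then axis j 1 $ a else ?J (h z) $ a $ b) $ a $ b)"
              by (cases "b = k") (simp_all add: Jhc)
          qed
          moreover have "continuous_on V (\<lambda>z. det (?J (h z)))" by (rule det_cont[OF Jhc])
          ultimately show "continuous_on V (\<lambda>z. cinv (?J (h z)) $ k $ j)"
            unfolding cinv_def using hU by (auto simp: U_def intro!: continuous_on_divide)
        qed
      qed
    qed
  qed
  moreover have "std_simplex \<subseteq> U" using inv by (auto simp: U_def invertible_det_nz)
  ultimately show "\<exists>U. open U \<and> std_simplex \<subseteq> U \<and> local_diffeo_on (gmap E F) U"
    using oU by blast
qed
end
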